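(* For each $q\in\{1,\dots,s\}$ and $j_1,j_2\ge0$, $$H_{p_{j_1}p_{j_2}}(\zeta)=\sum_{\substack{p\equiv q\ (\mathrm{mod}\ s)\\ 1\le p\le\min\{p_{j_1},p_{j_2}\}}}v^{(p)}_{j_1}\,\overline{v^{(p)}_{j_2}},\qquad v^{(p)}_j=\begin{cases}\frac{p_j}{\sqrt p}R_p\bigl(\frac{p_j-p}{s};\zeta\bigr),& p_j\ge p,\\ 0,&\text{otherwise},\end{cases}$$ where $p_j=q+js$ (a finite sum). More precisely, $H_{p+ks,\,p+\ell s}=\frac{(p+ks)(p+\ell s)}{p}R_p(k;\zeta)\overline{R_p(\ell;\zeta)}$ summed over admissible $p$.
   Context: Fix integers $N\ge1$ and $2\le s_1<\dots<s_N$; put $s=\gcd(s_1,\dots,s_N)$. For $\zeta\in\mathbb C^N$ let $U(x;\zeta)$ be the unique germ analytic at $x=0$ with $U(0;\zeta)=1$ and $U=1+\sum_{n=1}^N\zeta_nx^{s_n}U^{s_n}$; it depends on $x$ only through $x^s$, and $U(x;\zeta)^p=\sum_{m\ge0}R_p(m;\zeta)x^{ms}$. Define $K(x,\bar x';\zeta)=\log\bigl(1-x\bar x'U(x;\zeta)\overline{U(x';\zeta)}\bigr)$ as a power series in the independent variables $x,\bar x'$, and $H_{mn}(\zeta)=-mn\,[x^m][\bar x'^n]K$, $m,n\ge1$. *)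

theory Defs
  imports Complex_Main "HOL-Computational_Algebra.Formal_Power_Series"
begin

definition sgcd :: "nat \<Rightarrow> (nat \<Rightarrow> nat) \<Rightarrow> nat" where
  "sgcd N ss = Gcd (ss ` {1..N})"

definition Ufps :: "nat \<Rightarrow> (nat \<Rightarrow> nat) \<Rightarrow> (nat \<Rightarrow> complex) \<Rightarrow> complex fps" where
  "Ufps N ss z = (THE U. fps_nth U 0 = 1 \<and>
      U = 1 + (\<Sum>n\<in>{1..N}. fps_const (z n) * fps_X ^ (ss n) * U ^ (ss n)))"

definition Rcoef :: "nat \<Rightarrow> (nat \<Rightarrow> nat) \<Rightarrow> (nat \<Rightarrow> complex) \<Rightarrow> nat \<Rightarrow> nat \<Rightarrow> complex" where
  "Rcoef N ss z p m = fps_nth ((Ufps N ss z) ^ p) (m * sgcd N ss)"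

text \<open>Power series in two independent variables x, y (y standing for conj x'):
  outer variable x, coefficients are power series in y.\<close>
definition Wser :: "nat \<Rightarrow> (nat \<Rightarrow> nat) \<Rightarrow> (nat \<Rightarrow> complex) \<Rightarrow> complex fps fps" where
  "Wser N ss z = Abs_fps (\<lambda>m. fps_const (fps_nth (fps_X * Ufps N ss z) m) *
      (fps_X * Abs_fps (\<lambda>n. cnj (fps_nth (Ufps N ss z) n))))"

text \<open>K = log(1 - W) = - sum_{k>=1} W^k / k.  Since W^k has x-order >= k, the
  x^m coefficient only involves k = 1..m.\<close>
definition Kser :: "nat \<Rightarrow> (nat \<Rightarrow> nat) \<Rightarrow> (nat \<Rightarrow> complex) \<Rightarrow> complex fps fps" where
  "Kser N ss z = Abs_fps (\<lambda>m. - (\<Sum>k\<in>{1..m}.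
      fps_const (1 / of_nat k) * fps_nth ((Wser N ss z) ^ k) m))"

definition Hmat :: "nat \<Rightarrow> (nat \<Rightarrow> nat) \<Rightarrow> (nat \<Rightarrow> complex) \<Rightarrow> nat \<Rightarrow> nat \<Rightarrow> complex" where
  "Hmat N ss z m n = - of_nat (m * n) * fps_nth (fps_nth (Kser N ss z) m) n"

end

theory Submission
  imports Defs
begin
unbundle fps_syntax


definition agr :: "nat \<Rightarrow> 'a::comm_ring_1 fps \<Rightarrow> 'a fps \<Rightarrow> bool" where
  "agr k f g = (\<forall>i<k. f $ i = g $ i)"

lemma agr_mult: "agr k f g \<Longrightarrow> agr k f' g' \<Longrightarrow> agr k (f * f') (g * g')"
  unfolding agr_def fps_mult_nth
  by (auto intro!: sum.cong)

lemma agr_pow: assumes "agr k f g" shows "agr k (f ^ n) (g ^ n)"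
proof (induction n)
  case 0 show ?case by (simp add: agr_def)
next
  case (Suc n) then show ?case using agr_mult[OF assms Suc] by simp
qed

lemma agr_Xpow: "agr k f g \<Longrightarrow> agr (k + a) (fps_X ^ a * f) (fps_X ^ a * g)"
  unfolding agr_def fps_X_power_mult_nth by auto

lemma agr_cmult: "agr k f g \<Longrightarrow> agr k (fps_const c * f) (fps_const c * g)"
  unfolding agr_def by simp

lemma agr_add: "agr k f g \<Longrightarrow> agr k f' g' \<Longrightarrow> agr k (f + f') (g + g')"
  unfolding agr_def by simp

lemma agr_sum: "(\<And>n. n \<in> A \<Longrightarrow> agr k (F n) (G n)) \<Longrightarrow> agr k (sum F A) (sum G A)"
  unfolding agr_def fps_sum_nth by (auto intro!: sum.cong)

lemma agr_mono: "agr k f g \<Longrightarrow> j \<le> k \<Longrightarrow> agr j f g"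
  unfolding agr_def by auto

definition Tm :: "nat \<Rightarrow> (nat \<Rightarrow> nat) \<Rightarrow> (nat \<Rightarrow> complex) \<Rightarrow> complex fps \<Rightarrow> complex fps" where
  "Tm N ss z U = 1 + (\<Sum>n\<in>{1..N}. fps_const (z n) * fps_X ^ (ss n) * U ^ (ss n))"

lemma agr_T:
  assumes pos: "\<And>n. n \<in> {1..N} \<Longrightarrow> ss n \<ge> 1" and a: "agr k U V"
  shows "agr (Suc k) (Tm N ss z U) (Tm N ss z V)"
  unfolding Tm_def
proof (rule agr_add)
  show "agr (Suc k) 1 1" by (simp add: agr_def)
  show "agr (Suc k) (\<Sum>n\<in>{1..N}. fps_const (z n) * fps_X ^ ss n * U ^ ss n)
     (\<Sum>n\<in>{1..N}. fps_const (z n) * fps_X ^ ss n * V ^ ss n)"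
  proof (rule agr_sum)
    fix n assume n: "n \<in> {1..N}"
    have "agr (k + ss n) (fps_X ^ ss n * U ^ ss n) (fps_X ^ ss n * V ^ ss n)"
      by (rule agr_Xpow[OF agr_pow[OF a]])
    then have "agr (Suc k) (fps_X ^ ss n * U ^ ss n) (fps_X ^ ss n * V ^ ss n)"
      by (rule agr_mono) (use pos[OF n] in auto)
    then show "agr (Suc k) (fps_const (z n) * fps_X ^ ss n * U ^ ss n)
        (fps_const (z n) * fps_X ^ ss n * V ^ ss n)"
      by (metis agr_cmult mult.assoc)
  qed
qed

lemma T_unique:
  assumes pos: "\<And>n. n \<in> {1..N} \<Longrightarrow> ss n \<ge> 1"
    and "Tm N ss z U = U" "Tm N ss z V = V"
  shows "U = V"
proof -
  have "agr k U V" for k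
  proof (induction k)
    case 0 then show ?case by (simp add: agr_def)
  next
    case (Suc k) then show ?case using agr_T[where N=N and ss=ss and z=z, OF pos Suc] assms(2,3) by simp
  qed
  then show ?thesis unfolding agr_def by (auto simp: fps_eq_iff)
qed

definition itT where "itT N ss z k = (Tm N ss z ^^ k) 1"
definition Ue where "Ue N ss z = Abs_fps (\<lambda>n. itT N ss z (Suc n) $ n)"

lemma it_agr:
  assumes pos: "\<And>n. n \<in> {1..N} \<Longrightarrow> ss n \<ge> 1"
  shows "k \<le> k' \<Longrightarrow> agr k (itT N ss z k) (itT N ss z k')"
proof (induction k arbitrary: k')
  case 0 then show ?case by (simp add: agr_def)
next
  case (Suc k)
  then obtain k'' where k': "k' = Suc k''" "k \<le> k''" by (cases k') auto
  show ?case using agr_T[where N=N and ss=ss and z=z, OF pos Suc.IH[OF k'(2)]] k' by (simp add: itT_def)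
qed

lemma Ue_fix:
  assumes pos: "\<And>n. n \<in> {1..N} \<Longrightarrow> ss n \<ge> 1"
  shows "Tm N ss z (Ue N ss z) = Ue N ss z"
proof -
  have ag: "agr n (Ue N ss z) (itT N ss z n)" for n
    unfolding agr_def
  proof (intro allI impI)
    fix i assume "i < n"
    then have "agr (Suc i) (itT N ss z (Suc i)) (itT N ss z n)" by (intro it_agr[where N=N and ss=ss and z=z, OF pos]) auto
    then show "Ue N ss z $ i = itT N ss z n $ i" by (simp add: Ue_def agr_def)
  qed
  show ?thesis
  proof (rule fps_ext)
    fix n
    have "Tm N ss z (Ue N ss z) $ n = Tm N ss z (itT N ss z n) $ n"
      using agr_T[where N=N and ss=ss and z=z, OF pos ag[of n]] by (simp add: agr_def)
    also have "\<dots> = Ue N ss z $ n" by (simp add: itT_def Ue_def)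
    finally show "Tm N ss z (Ue N ss z) $ n = Ue N ss z $ n" .
  qed
qed

lemma T0:
  assumes pos: "\<And>n. n \<in> {1..N} \<Longrightarrow> ss n \<ge> 1"
  shows "Tm N ss z U $ 0 = 1"
proof -
  have "agr 1 (Tm N ss z U) (Tm N ss z 0)" using agr_T[where N=N and ss=ss and z=z and k=0 and U=U and V=0, OF pos] by (simp add: agr_def)
  moreover have "Tm N ss z 0 = 1" unfolding Tm_def using pos
    by (fastforce intro!: sum.neutral simp: power_0_left)
  ultimately show ?thesis by (simp add: agr_def)
qed

lemma Ufps_eq:
  assumes pos: "\<And>n. n \<in> {1..N} \<Longrightarrow> ss n \<ge> 1"
  shows "Ufps N ss z = Ue N ss z"
  unfolding Ufps_def
proof (rule the_equality)
  show "Ue N ss z $ 0 = 1 \<and> Ue N ss z = 1 + (\<Sum>n = 1..N. fps_const (z n) * fps_X ^ ss n * Ue N ss z ^ ss n)"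
    using Ue_fix[OF pos] T0[where N=N and ss=ss and z=z and U="Ue N ss z", OF pos] unfolding Tm_def by simp
  fix U assume "U $ 0 = 1 \<and> U = 1 + (\<Sum>n = 1..N. fps_const (z n) * fps_X ^ ss n * U ^ ss n)"
  then have "Tm N ss z U = U" unfolding Tm_def by simp
  then show "U = Ue N ss z" using T_unique[where N=N and ss=ss and z=z, OF pos] Ue_fix[where N=N and ss=ss and z=z, OF pos] by blast
qed

definition supp :: "nat \<Rightarrow> 'a::comm_ring_1 fps \<Rightarrow> bool" where
  "supp s f = (\<forall>i. \<not> s dvd i \<longrightarrow> f $ i = 0)"

lemma supp_mult: "supp s f \<Longrightarrow> supp s g \<Longrightarrow> supp s (f * g)"
  unfolding supp_def fps_mult_nth
proof (intro allI impI sum.neutral ballI)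
  fix i j assume f: "\<forall>i. \<not> s dvd i \<longrightarrow> f $ i = 0" and g: "\<forall>i. \<not> s dvd i \<longrightarrow> g $ i = 0"
    and i: "\<not> s dvd i" and j: "j \<in> {0..i}"
  have "\<not> s dvd j \<or> \<not> s dvd (i - j)"
  proof (rule ccontr)
    assume "\<not> ?thesis"
    then have "s dvd j + (i - j)" by auto
    with j i show False by simp
  qed
  then show "f $ j * g $ (i - j) = 0" using f g by auto
qed

lemma supp_one: "supp s 1"
  unfolding supp_def by auto

lemma supp_pow: "supp s f \<Longrightarrow> supp s (f ^ n)"
  by (induction n) (auto intro: supp_mult supp_one)

lemma supp_Xpow: "supp s f \<Longrightarrow> s dvd a \<Longrightarrow> supp s (fps_X ^ a * f)"
  unfolding supp_def fps_X_power_mult_nth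
proof (intro allI impI)
  fix i assume f: "\<forall>i. \<not> s dvd i \<longrightarrow> f $ i = 0" and a: "s dvd a" and i: "\<not> s dvd i"
  show "(if i < a then 0 else f $ (i - a)) = 0"
  proof (cases "i < a")
    case False
    have "\<not> s dvd (i - a)"
    proof
      assume "s dvd (i - a)"
      then have "s dvd (i - a) + a" using a by simp
      with False i show False by simp
    qed
    then show ?thesis using f False by simp
  qed simp
qed

lemma supp_T:
  assumes "\<And>n. n \<in> {1..N} \<Longrightarrow> s dvd ss n" "supp s U"
  shows "supp s (Tm N ss z U)"
  unfolding Tm_def supp_def
proof (intro allI impI)
  fix i assume i: "\<not> s dvd i"
  have "supp s (fps_X ^ ss n * U ^ ss n)" if "n \<in> {1..N}" for n
    using supp_Xpow[OF supp_pow[OF assms(2)] assms(1)[OF that]] .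
  then have "(fps_const (z n) * fps_X ^ ss n * U ^ ss n) $ i = 0" if "n \<in> {1..N}" for n
    using that i by (simp add: supp_def mult.assoc)
  moreover have "(1::complex fps) $ i = 0" using i by (cases i) auto
  ultimately show "(1 + (\<Sum>n = 1..N. fps_const (z n) * fps_X ^ ss n * U ^ ss n)) $ i = 0"
    by (simp add: fps_sum_nth)
qed

lemma supp_Ue:
  assumes "\<And>n. n \<in> {1..N} \<Longrightarrow> s dvd ss n"
  shows "supp s (Ue N ss z)"
proof -
  have "supp s (itT N ss z k)" for k
    by (induction k) (auto simp: itT_def supp_one intro: supp_T[OF assms])
  then show ?thesis unfolding supp_def Ue_def by simp
qed



lemma fps_const_sum: "fps_const (sum f A) = (\<Sum>a\<in>A. fps_const (f a))"
  by (induction A rule: infinite_finite_induct) (auto simp: fps_const_add[symmetric])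

lemma mulW: "Abs_fps (\<lambda>m. fps_const (f $ m) * B) * Abs_fps (\<lambda>m. fps_const (g $ m) * C)
   = Abs_fps (\<lambda>m. fps_const ((f * g) $ m) * (B * C :: 'a::comm_ring_1 fps))"
proof (rule fps_ext)
  fix m
  show "(Abs_fps (\<lambda>m. fps_const (f $ m) * B) * Abs_fps (\<lambda>m. fps_const (g $ m) * C)) $ m =
    Abs_fps (\<lambda>m. fps_const ((f * g) $ m) * (B * C)) $ m"
    unfolding fps_mult_nth[of _ _ m] fps_nth_Abs_fps fps_const_sum sum_distrib_right
    by (intro sum.cong refl) (simp only: fps_const_mult[symmetric] mult_ac)
qed

lemma Wpow: "(Abs_fps (\<lambda>m. fps_const (f $ m) * B)) ^ k
   = Abs_fps (\<lambda>m. fps_const ((f ^ k) $ m) * (B ^ k :: 'a::comm_ring_1 fps))"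
proof (induction k)
  case 0
  show ?case by (rule fps_ext) simp
next
  case (Suc k)
  show ?case by (simp only: power_Suc Suc mulW)
qed

definition cf :: "complex fps \<Rightarrow> complex fps" where
  "cf f = Abs_fps (\<lambda>n. cnj (f $ n))"

lemma cf_mult: "cf (f * g) = cf f * cf g"
  unfolding cf_def by (rule fps_ext) (simp add: fps_mult_nth)

lemma cf_pow: "cf (f ^ k) = (cf f) ^ k"
proof (induction k)
  case 0 show ?case by (rule fps_ext) (simp add: cf_def)
next
  case (Suc k) then show ?case by (simp add: cf_mult)
qed

lemma Kcoef:
  "fps_nth (fps_nth (Kser N ss z) m) n =
     - (\<Sum>k\<in>{1..m}. 1 / of_nat k * (if m < k then 0 else (Ufps N ss z ^ k) $ (m - k))
         * (if n < k then 0 else cnj ((Ufps N ss z ^ k) $ (n - k))))"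
proof -
  define U where "U = Ufps N ss z"
  have W: "Wser N ss z = Abs_fps (\<lambda>m. fps_const ((fps_X * U) $ m) * (fps_X * cf U))"
    unfolding Wser_def U_def cf_def by simp
  have B: "((fps_X * cf U) ^ k) $ n = (if n < k then 0 else cnj ((U ^ k) $ (n - k)))" for k
    unfolding power_mult_distrib fps_X_power_mult_nth cf_pow[symmetric] by (simp add: cf_def)
  have A: "((fps_X * U) ^ k) $ m = (if m < k then 0 else (U ^ k) $ (m - k))" for k
    by (simp add: power_mult_distrib fps_X_power_mult_nth)
  show ?thesis
    unfolding Kser_def fps_nth_Abs_fps W Wpow U_def[symmetric] fps_neg_nth fps_sum_nth
      fps_mult_left_const_nth A B by (simp add: mult.assoc)
qed



lemma aux:
  fixes r K A B :: complex
  assumes "r * r = K" "r \<noteq> 0"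
  shows "cnj r = r \<Longrightarrow> of_nat (m * n) * (1 / K * A * cnj B) = (of_nat m / r * A) * cnj (of_nat n / r * B)"
proof -
  assume c: "cnj r = r"
  have "K \<noteq> 0" using assms by auto
  then show ?thesis using assms(2) c by (simp add: field_simps assms(1)[symmetric])
qed

theorem proposition2p7:
  fixes N :: nat and ss :: "nat \<Rightarrow> nat" and z :: "nat \<Rightarrow> complex"
    and q j1 j2 :: nat
  assumes "N \<ge> 1"
    and "2 \<le> ss 1"
    and "\<And>i. 1 \<le> i \<Longrightarrow> i < N \<Longrightarrow> ss i < ss (Suc i)"
    and "q \<in> {1..sgcd N ss}"
  shows "(let s = sgcd N ss;
              pj = (\<lambda>j. q + j * s);
              v = (\<lambda>j p. if pj j \<ge> p
                         then of_nat (pj j) / complex_of_real (sqrt (real p))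
                              * Rcoef N ss z p ((pj j - p) div s)
                         else 0)
          in Hmat N ss z (pj j1) (pj j2)
             = (\<Sum>p\<in>{p. 1 \<le> p \<and> p \<le> min (pj j1) (pj j2) \<and> p mod s = q mod s}.
                   v j1 p * cnj (v j2 p)))"
proof -
  define s where "s = sgcd N ss"
  define U where "U = Ufps N ss z"
  have ss2: "n \<le> N \<longrightarrow> ss n \<ge> 2" if "n \<ge> 1" for n
    using that
  proof (induction n rule: dec_induct)
    case base then show ?case using assms(2) by simp
  next
    case (step n) then show ?case using assms(3)[of n] by auto
  qed
  have pos: "\<And>n. n \<in> {1..N} \<Longrightarrow> ss n \<ge> 1" using ss2 by force
  have sdvd: "\<And>n. n \<in> {1..N} \<Longrightarrow> s dvd ss n" unfolding s_def sgcd_def by (simp add: Gcd_dvd)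
  have s1: "ss 1 \<in> ss ` {1..N}" using assms(1) by auto
  have s0: "s \<noteq> 0" unfolding s_def sgcd_def Gcd_0_iff using s1 assms(2) by force
  have suppU: "supp s (U ^ k)" for k
  proof -
    have "Ufps N ss z = Ue N ss z" by (rule Ufps_eq) (use pos in auto)
    then show ?thesis unfolding U_def by (auto intro!: supp_pow supp_Ue sdvd)
  qed
  define m where "m = q + j1 * s"
  define n where "n = q + j2 * s"
  define v where "v = (\<lambda>j p. if q + j * s \<ge> p
                         then of_nat (q + j * s) / complex_of_real (sqrt (real p))
                              * Rcoef N ss z p ((q + j * s - p) div s)
                         else 0)"
  define c where "c = (\<lambda>k. of_nat (m * n) * (1 / of_nat k * (U ^ k) $ (m - k) * cnj ((U ^ k) $ (n - k))))"
  have L: "Hmat N ss z m n = (\<Sum>k\<in>{1..min m n}. c k)"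
  proof -
    have "Hmat N ss z m n = (\<Sum>k\<in>{1..m}. of_nat (m * n) * (1 / of_nat k * (if m < k then 0 else (U ^ k) $ (m - k))
         * (if n < k then 0 else cnj ((U ^ k) $ (n - k)))))"
      unfolding Hmat_def Kcoef U_def by (simp add: sum_distrib_left sum_negf)
    also have "\<dots> = (\<Sum>k\<in>{1..min m n}. c k)"
      by (rule sum.mono_neutral_cong_right) (auto simp: c_def)
    finally show ?thesis .
  qed
  have R: "(\<Sum>p\<in>{p. 1 \<le> p \<and> p \<le> min m n \<and> p mod s = q mod s}. v j1 p * cnj (v j2 p))
     = (\<Sum>p\<in>{1..min m n}. if p mod s = q mod s then v j1 p * cnj (v j2 p) else 0)"
  proof -
    have "{p. 1 \<le> p \<and> p \<le> min m n \<and> p mod s = q mod s} = {p \<in> {1..min m n}. p mod s = q mod s}"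
      by auto
    then show ?thesis using sum.inter_filter[of "{1..min m n}" "\<lambda>p. v j1 p * cnj (v j2 p)" "\<lambda>p. p mod s = q mod s"]
      by simp
  qed
  have T: "c k = (if k mod s = q mod s then v j1 k * cnj (v j2 k) else 0)" if k: "k \<in> {1..min m n}" for k
  proof -
    have km: "k \<le> m" "k \<le> n" "k \<ge> 1" using k by auto
    have mm: "m mod s = q mod s" "n mod s = q mod s" unfolding m_def n_def by simp_all
    show ?thesis
    proof (cases "k mod s = q mod s")
      case False
      then have "\<not> s dvd (m - k)" using km mm by (simp add: mod_eq_dvd_iff_nat[symmetric])
      then have "(U ^ k) $ (m - k) = 0" using suppU[of k] by (simp add: supp_def)
      then show ?thesis using False by (simp add: c_def)
    next
      case True
      have "s dvd m - k" using True km mm mod_eq_dvd_iff_nat[of k m s] by simp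
      then have d1: "(m - k) div s * s = m - k" by (rule dvd_div_mult_self)
      have "s dvd n - k" using True km mm mod_eq_dvd_iff_nat[of k n s] by simp
      then have d2: "(n - k) div s * s = n - k" by (rule dvd_div_mult_self)
      have v1: "v j1 k = of_nat m / complex_of_real (sqrt (real k)) * (U ^ k) $ (m - k)"
      proof -
        have "v j1 k = of_nat m / complex_of_real (sqrt (real k)) * Rcoef N ss z k ((m - k) div s)"
          using km unfolding v_def by (simp add: m_def)
        then show ?thesis by (simp add: Rcoef_def s_def[symmetric] U_def[symmetric] d1)
      qed
      have v2: "v j2 k = of_nat n / complex_of_real (sqrt (real k)) * (U ^ k) $ (n - k)"
      proof -
        have "v j2 k = of_nat n / complex_of_real (sqrt (real k)) * Rcoef N ss z k ((n - k) div s)"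
          using km unfolding v_def by (simp add: n_def)
        then show ?thesis by (simp add: Rcoef_def s_def[symmetric] U_def[symmetric] d2)
      qed
      have sq: "complex_of_real (sqrt (real k)) * complex_of_real (sqrt (real k)) = of_nat k"
        unfolding of_real_mult[symmetric] real_sqrt_mult_self by simp
      have nz: "complex_of_real (sqrt (real k)) \<noteq> 0" using km by simp
      have "c k = v j1 k * cnj (v j2 k)" unfolding v1 v2 c_def
        by (rule aux[OF sq nz]) simp
      then show ?thesis using True by simp
    qed
  qed
  show ?thesis
  proof -
    have "Hmat N ss z m n = (\<Sum>p\<in>{1..min m n}. if p mod s = q mod s then v j1 p * cnj (v j2 p) else 0)"
      unfolding L by (rule sum.cong[OF refl T])
    also have "\<dots> = (\<Sum>p\<in>{p. 1 \<le> p \<and> p \<le> min m n \<and> p mod s = q mod s}. v j1 p * cnj (v j2 p))"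
      using R by simp
    finally have main: "Hmat N ss z m n = (\<Sum>p\<in>{p. 1 \<le> p \<and> p \<le> min m n \<and> p mod s = q mod s}. v j1 p * cnj (v j2 p))" .
    show ?thesis using main unfolding Let_def v_def m_def n_def s_def by simp
  qed
qed

end
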